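(* Let $C$ be a linear code of length $n$ over $R$. Then \[ SLWE_{C^\perp}(X_0,X_1,\dots,X_{16})=\frac{1}{|C|}\,SLWE_C(B_0,B_1,\dots,B_{16}), \] where for $0\le k\le 16$, $B_k=\sum_{j=0}^{16}K_j(k)X_j$ and $K_j(k)$ is the coefficient of $Y^j$ in $(1+Y)^{16-k}(1-Y)^k$. (For instance $B_0=\sum_{j}\binom{16}{j}X_j$, $B_8=X_0-8X_2+28X_4-56X_6+70X_8-56X_{10}+28X_{12}-8X_{14}+X_{16}$, $B_{16}=\sum_j(-1)^j\binom{16}{j}X_j$.)
   Context: $R=\mathbb{Z}_4[u,v,w]/\langle u^2-u,v^2-v,w^2-w\rangle$. With $\eta_1=(1-u)(1-v)(1-w)$, $\eta_2=u(1-v)(1-w)$, $\eta_3=(1-u)v(1-w)$, $\eta_4=(1-u)(1-v)w$, $\eta_5=uv(1-w)$, $\eta_6=u(1-v)w$, $\eta_7=(1-u)vw$, $\eta_8=uvw$, every $r\in R$ is uniquely $r=\sum_{i=1}^8 r_i\eta_i$ with $r_i\in\mathbb{Z}_4$ (explicitly, for $r=a+bu+cv+dw+euv+fuw+gvw+huvw$: $r_1=a$, $r_2=a+b$, $r_3=a+c$, $r_4=a+d$, $r_5=a+b+c+e$, $r_6=a+b+d+f$, $r_7=a+c+d+g$, $r_8=a+b+c+d+e+f+g+h$). The Lee weight on $\mathbb{Z}_4$ is $w_L(0)=0$, $w_L(1)=w_L(3)=1$, $w_L(2)=2$, and on $R$ it is $w_L(r)=\sum_{i=1}^8 w_L(r_i)\in\{0,\dots,16\}$.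 A linear code is an $R$-submodule of $R^n$, with dual $C^\perp$ taken w.r.t. $\langle\mathbf{x},\mathbf{y}\rangle=\sum_jx_jy_j$ in $R$. For $\mathbf{c}\in R^n$ and $0\le j\le 16$, $n_j(\mathbf{c})$ is the number of coordinates of $\mathbf{c}$ of Lee weight $j$, and $SLWE_C(X_0,\dots,X_{16})=\sum_{\mathbf{c}\in C}\prod_{j=0}^{16}X_j^{n_j(\mathbf{c})}$. *)

theory Defs
  imports "HOL-Library.Numeral_Type" "HOL-Computational_Algebra.Polynomial"
begin

text \<open>Z4 is the numeral type 4. An element of R = Z4[u,v,w]/(u^2-u,v^2-v,w^2-w) is
  represented by its coefficients w.r.t. the Z4-basis of squarefree monomials
  u^a v^b w^c, the monomial being indexed by (a,b,c) :: bool*bool*bool.\<close>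

type_synonym z4 = 4
type_synonym mono = "bool \<times> bool \<times> bool"
type_synonym R = "mono \<Rightarrow> z4"

definition mono_mult :: "mono \<Rightarrow> mono \<Rightarrow> mono" where
  "mono_mult p q = (fst p \<or> fst q, fst (snd p) \<or> fst (snd q), snd (snd p) \<or> snd (snd q))"

definition R_zero :: R where "R_zero = (\<lambda>_. 0)"

definition R_add :: "R \<Rightarrow> R \<Rightarrow> R" where "R_add x y = (\<lambda>m. x m + y m)"

definition R_mult :: "R \<Rightarrow> R \<Rightarrow> R" where
  "R_mult x y = (\<lambda>m. \<Sum>p\<in>UNIV. \<Sum>q\<in>UNIV. if mono_mult p q = m then x p * y q else 0)"

text \<open>Component r_i of r at the idempotent eta_i: eta_i corresponds to the point
  p in {0,1}^3 (u,v,w evaluated), and r_i = sum of the coefficients of the monomials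
  dividing the monomial of p.\<close>

definition mono_le :: "mono \<Rightarrow> mono \<Rightarrow> bool" where
  "mono_le m p = ((fst m \<longrightarrow> fst p) \<and> (fst (snd m) \<longrightarrow> fst (snd p)) \<and> (snd (snd m) \<longrightarrow> snd (snd p)))"

definition R_comp :: "R \<Rightarrow> mono \<Rightarrow> z4" where
  "R_comp x p = (\<Sum>m\<in>{m. mono_le m p}. x m)"

definition lee_z4 :: "z4 \<Rightarrow> nat" where
  "lee_z4 a = (if a = 0 then 0 else if a = 2 then 2 else 1)"

definition lee_R :: "R \<Rightarrow> nat" where
  "lee_R x = (\<Sum>p\<in>UNIV. lee_z4 (R_comp x p))"

definition vecs :: "nat \<Rightarrow> (nat \<Rightarrow> R) set" where
  "vecs n = {x. \<forall>i\<ge>n. x i = R_zero}"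

definition linear_code :: "nat \<Rightarrow> (nat \<Rightarrow> R) set \<Rightarrow> bool" where
  "linear_code n C \<longleftrightarrow> C \<subseteq> vecs n \<and> (\<lambda>_. R_zero) \<in> C
     \<and> (\<forall>x\<in>C. \<forall>y\<in>C. (\<lambda>i. R_add (x i) (y i)) \<in> C)
     \<and> (\<forall>r. \<forall>x\<in>C. (\<lambda>i. R_mult r (x i)) \<in> C)"

definition R_inner :: "nat \<Rightarrow> (nat \<Rightarrow> R) \<Rightarrow> (nat \<Rightarrow> R) \<Rightarrow> R" where
  "R_inner n x y = (\<lambda>m. \<Sum>j<n. R_mult (x j) (y j) m)"

definition dual_code :: "nat \<Rightarrow> (nat \<Rightarrow> R) set \<Rightarrow> (nat \<Rightarrow> R) set" where
  "dual_code n C = {y \<in> vecs n. \<forall>x\<in>C. R_inner n x y = R_zero}"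

definition n_wt :: "nat \<Rightarrow> nat \<Rightarrow> (nat \<Rightarrow> R) \<Rightarrow> nat" where
  "n_wt n j c = card {i. i < n \<and> lee_R (c i) = j}"

definition SLWE :: "nat \<Rightarrow> (nat \<Rightarrow> R) set \<Rightarrow> (nat \<Rightarrow> 'a::comm_ring_1) \<Rightarrow> 'a" where
  "SLWE n C X = (\<Sum>c\<in>C. \<Prod>j\<le>16. X j ^ n_wt n j c)"

definition Kraw :: "nat \<Rightarrow> nat \<Rightarrow> int" where
  "Kraw j k = coeff ([:1, 1:] ^ (16 - k) * [:1, -1:] ^ k) j"

definition Bvar :: "(nat \<Rightarrow> 'a::comm_ring_1) \<Rightarrow> nat \<Rightarrow> 'a" where
  "Bvar X k = (\<Sum>j\<le>16. of_int (Kraw j k) * X j)"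

end

theory Submission
  imports Defs "HOL-Library.FuncSet"
begin

lemma UNIV_4: "(UNIV::4 set) = {0,1,2,3}"
proof -
  have "card {0,1,2::4,3} = 4" by simp
  moreover have "CARD(4) = 4" by simp
  ultimately show ?thesis using card_subset_eq[OF finite_class.finite_UNIV subset_UNIV, of "{0,1,2::4,3}"] by simp
qed
lemma z4_cases: "(z::4) = 0 \<or> z = 1 \<or> z = 2 \<or> z = 3"
  using UNIV_4 by auto

definition rank :: "mono \<Rightarrow> nat" where
  "rank m = (if fst m then 1 else 0) + (if fst (snd m) then 1 else 0) + (if snd (snd m) then 1 else 0)"

lemma mono_le_rank: "mono_le q m \<Longrightarrow> q \<noteq> m \<Longrightarrow> rank q < rank m"
  by (cases q; cases m) (auto simp: mono_le_def rank_def)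

lemma mono_le_refl: "mono_le m m" by (simp add: mono_le_def)

lemma R_comp_zero_imp: assumes "\<And>p. R_comp d p = 0" shows "d m = 0"
proof (induction "rank m" arbitrary: m rule: less_induct)
  case less
  have "R_comp d m = d m + (\<Sum>q\<in>{q. mono_le q m} - {m}. d q)"
    unfolding R_comp_def by (subst sum.remove[of _ m]) (auto simp: mono_le_refl)
  also have "(\<Sum>q\<in>{q. mono_le q m} - {m}. d q) = 0"
    by (rule sum.neutral) (auto intro: less mono_le_rank)
  finally show ?case using assms by simp
qed

lemma R_comp_diff: "R_comp (\<lambda>m. x m - y m) p = R_comp x p - R_comp y p"
  unfolding R_comp_def by (simp add: sum_subtractf)

lemma R_comp_inj: "inj R_comp"
proof (rule injI)
  fix x y assume "R_comp x = R_comp y"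
  hence "\<And>p. R_comp (\<lambda>m. x m - y m) p = 0" by (simp add: R_comp_diff)
  hence "\<And>m. x m - y m = 0" by (rule R_comp_zero_imp)
  thus "x = y" by auto
qed

lemma R_comp_bij: "bij R_comp"
  using R_comp_inj by (simp add: bij_def finite_UNIV_inj_surj)

lemma R_comp_add: "R_comp (R_add x y) p = R_comp x p + R_comp y p"
  unfolding R_comp_def R_add_def by (simp add: sum.distrib)

lemma mono_le_mult: "mono_le (mono_mult q r) p \<longleftrightarrow> mono_le q p \<and> mono_le r p"
  by (auto simp: mono_le_def mono_mult_def)

lemma R_comp_mult: "R_comp (R_mult x y) p = R_comp x p * R_comp y p"
proof -
  have "R_comp (R_mult x y) p = (\<Sum>m\<in>{m. mono_le m p}. \<Sum>q\<in>UNIV. \<Sum>r\<in>UNIV. if mono_mult q r = m then x q * y r else 0)"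
    unfolding R_comp_def R_mult_def by simp
  also have "\<dots> = (\<Sum>q\<in>UNIV. \<Sum>m\<in>{m. mono_le m p}. \<Sum>r\<in>UNIV. if mono_mult q r = m then x q * y r else 0)"
    by (rule sum.swap)
  also have "\<dots> = (\<Sum>q\<in>UNIV. \<Sum>r\<in>UNIV. \<Sum>m\<in>{m. mono_le m p}. if mono_mult q r = m then x q * y r else 0)"
    by (rule sum.cong[OF refl], rule sum.swap)
  also have "\<dots> = (\<Sum>q\<in>UNIV. \<Sum>r\<in>UNIV. if mono_le (mono_mult q r) p then x q * y r else 0)"
    by (rule sum.cong[OF refl], rule sum.cong[OF refl]) (simp add: sum.delta)
  also have "\<dots> = (\<Sum>q\<in>UNIV. \<Sum>r\<in>UNIV. (if mono_le q p then x q else 0) * (if mono_le r p then y r else 0))"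
    by (intro sum.cong refl) (auto simp: mono_le_mult)
  also have "\<dots> = R_comp x p * R_comp y p"
    unfolding R_comp_def by (simp add: sum_product[symmetric] sum.If_cases)
  finally show ?thesis .
qed



definition chi :: "4 \<Rightarrow> complex" where
  "chi z = (if z = 0 then 1 else if z = 1 then \<i> else if z = 2 then -1 else -\<i>)"

lemma chi_add: "chi (a + b) = chi a * chi b"
  using z4_cases[of a] z4_cases[of b] by (auto simp: chi_def)

lemma chi_0[simp]: "chi 0 = 1" by (simp add: chi_def)

lemma chi_one_iff: "chi z = 1 \<longleftrightarrow> z = 0"
  using z4_cases[of z] by (auto simp: chi_def complex_eq_iff)

lemma chi_sum: "finite A \<Longrightarrow> chi (\<Sum>x\<in>A. f x) = (\<Prod>x\<in>A. chi (f x))"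
  by (induction A rule: finite_induct) (auto simp: chi_add)

definition hpoly :: "4 \<Rightarrow> complex poly" where
  "hpoly a = (\<Sum>c\<in>UNIV. monom (chi (a * c)) (lee_z4 c))"

lemma lee_z4_le: "lee_z4 a \<le> 2" by (simp add: lee_z4_def)

lemma lee_z4_vals[simp]: "lee_z4 0 = 0" "lee_z4 1 = 1" "lee_z4 2 = 2" "lee_z4 3 = 1"
  by (simp_all add: lee_z4_def)

lemma hpoly_expand: "hpoly a = [:chi 0, chi a + chi (3*a), chi (2*a):]"
proof -
  have "hpoly a = monom (chi 0) 0 + (monom (chi a) 1 + (monom (chi (2*a)) 2 + monom (chi (3*a)) 1))"
    unfolding hpoly_def UNIV_4 by (simp add: mult.commute)
  also have "\<dots> = [:chi 0, chi a + chi (3*a), chi (2*a):]"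
    by (simp add: monom_Suc monom_0 numeral_2_eq_2 one_pCons)
  finally show ?thesis .
qed

lemma hpoly_eq: "hpoly a = [:1,1:]^(2 - lee_z4 a) * [:1,-1:]^(lee_z4 a)"
  using z4_cases[of a]
  apply (elim disjE)
  apply (simp_all add: hpoly_expand chi_def power2_eq_square)
  done




lemma prod_monom: "finite A \<Longrightarrow> (\<Prod>x\<in>A. monom (f x) (g x)) = monom (\<Prod>x\<in>A. f x) (\<Sum>x\<in>A. g x)"
  by (induction A rule: finite_induct) (auto simp: mult_monom)

lemma coeff_prod_hpoly:
  "coeff (\<Prod>p\<in>UNIV. hpoly (a p)) j = (\<Sum>b\<in>{b::mono\<Rightarrow>4. (\<Sum>p\<in>UNIV. lee_z4 (b p)) = j}. chi (\<Sum>p\<in>UNIV. a p * b p))"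
proof -
  have "(\<Prod>p\<in>UNIV. hpoly (a p)) = (\<Sum>b\<in>PiE UNIV (\<lambda>_. UNIV). \<Prod>p\<in>UNIV. monom (chi (a p * b p)) (lee_z4 (b p)))"
    unfolding hpoly_def by (rule prod_sum_PiE) auto
  also have "\<dots> = (\<Sum>b\<in>UNIV. monom (\<Prod>p\<in>UNIV. chi (a p * b p)) (\<Sum>p\<in>UNIV. lee_z4 (b p)))"
    by (simp add: prod_monom)
  finally have "coeff (\<Prod>p\<in>UNIV. hpoly (a p)) j = (\<Sum>b\<in>UNIV. if (\<Sum>p\<in>UNIV. lee_z4 (b p)) = j then (\<Prod>p\<in>UNIV. chi (a p * b p)) else 0)"
    by (simp add: coeff_sum coeff_monom)
  also have "\<dots> = (\<Sum>b\<in>{b::mono\<Rightarrow>4. (\<Sum>p\<in>UNIV. lee_z4 (b p)) = j}. \<Prod>p\<in>UNIV. chi (a p * b p))"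
    by (simp add: sum.If_cases)
  finally show ?thesis by (simp add: chi_sum)
qed

lemma card_mono: "CARD(mono) = 8" by (simp add: card_UNIV_bool)

lemma prod_hpoly: fixes a :: "mono \<Rightarrow> 4" shows "(\<Prod>p\<in>UNIV. hpoly (a p)) = [:1,1:]^(16 - (\<Sum>p\<in>UNIV. lee_z4 (a p))) * [:1,-1:]^(\<Sum>p\<in>UNIV. lee_z4 (a p))"
proof -
  have s: "(\<Sum>p\<in>UNIV. 2 - lee_z4 (a p)) + (\<Sum>p\<in>UNIV. lee_z4 (a p)) = 16"
  proof -
    have "(\<Sum>p\<in>UNIV. 2 - lee_z4 (a p)) + (\<Sum>p\<in>UNIV. lee_z4 (a p)) = (\<Sum>p\<in>(UNIV::mono set). 2)"
      using lee_z4_le by (simp add: sum.distrib[symmetric])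
    also have "\<dots> = 16" using card_mono by simp
    finally show ?thesis .
  qed
  have "(\<Prod>p\<in>UNIV. hpoly (a p)) = [:1,1:]^(\<Sum>p\<in>UNIV. 2 - lee_z4 (a p)) * [:1,-1:]^(\<Sum>p\<in>UNIV. lee_z4 (a p))"
    by (simp add: hpoly_eq prod.distrib power_sum)
  also have "(\<Sum>p\<in>UNIV. 2 - lee_z4 (a p)) = 16 - (\<Sum>p\<in>UNIV. lee_z4 (a p))" using s by simp
  finally show ?thesis .
qed

lemma map_poly_of_int_mult:
  "map_poly (of_int::int\<Rightarrow>'b::comm_ring_1) (p * q) = map_poly of_int p * map_poly of_int q"
  by (rule poly_eqI) (simp add: coeff_map_poly coeff_mult of_int_sum)

lemma map_poly_of_int_power:
  "map_poly (of_int::int\<Rightarrow>'b::comm_ring_1) (p ^ k) = map_poly of_int p ^ k"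
  by (induction k) (simp_all add: map_poly_of_int_mult)

lemma Kraw_complex: "(of_int (Kraw j k) :: complex) = coeff ([:1,1:]^(16-k) * [:1,-1:]^k) j"
proof -
  have "(of_int (Kraw j k) :: complex) = coeff (map_poly of_int ([:1,1:]^(16-k) * [:1,-1:]^k)) j"
    unfolding Kraw_def by (simp add: coeff_map_poly)
  also have "map_poly of_int ([:1,1:]^(16-k) * [:1,-1:]^k :: int poly) = ([:1,1:]^(16-k) * [:1,-1:]^k :: complex poly)"
    by (simp add: map_poly_of_int_mult map_poly_of_int_power map_poly_pCons)
  finally show ?thesis .
qed




definition tr :: "R \<Rightarrow> 4" where "tr x = (\<Sum>p\<in>UNIV. R_comp x p)"

lemma bij_betw_R_comp_Collect: "bij_betw R_comp {y. P (R_comp y)} {b. P b}"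
proof -
  have "inj_on R_comp {y. P (R_comp y)}" by (rule inj_on_subset[OF R_comp_inj subset_UNIV])
  moreover have "R_comp ` {y. P (R_comp y)} = {b. P b}"
  proof
    show "{b. P b} \<subseteq> R_comp ` {y. P (R_comp y)}"
    proof
      fix b assume "b \<in> {b. P b}"
      obtain y where "b = R_comp y" using R_comp_bij by (metis bij_pointE)
      thus "b \<in> R_comp ` {y. P (R_comp y)}" using \<open>b \<in> {b. P b}\<close> by auto
    qed
  qed auto
  ultimately show ?thesis by (simp add: bij_betw_def)
qed

lemma local_K: "(\<Sum>y\<in>{y::R. lee_R y = j}. chi (tr (R_mult x y))) = of_int (Kraw j (lee_R x))"
proof -
  have "(\<Sum>y\<in>{y::R. lee_R y = j}. chi (tr (R_mult x y)))
      = (\<Sum>y\<in>{y::R. (\<Sum>p\<in>UNIV. lee_z4 (R_comp y p)) = j}. chi (\<Sum>p\<in>UNIV. R_comp x p * R_comp y p))"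
    unfolding lee_R_def tr_def by (simp add: R_comp_mult)
  also have "\<dots> = (\<Sum>b\<in>{b. (\<Sum>p\<in>UNIV. lee_z4 (b p)) = j}. chi (\<Sum>p\<in>UNIV. R_comp x p * b p))"
    by (rule sum.reindex_bij_betw[OF bij_betw_R_comp_Collect])
  also have "\<dots> = coeff (\<Prod>p\<in>UNIV. hpoly (R_comp x p)) j"
    by (rule coeff_prod_hpoly[symmetric])
  also have "\<dots> = of_int (Kraw j (lee_R x))"
    unfolding prod_hpoly Kraw_complex lee_R_def ..
  finally show ?thesis .
qed




lemma R_comp_zero[simp]: "R_comp R_zero p = 0"
  by (simp add: R_comp_def R_zero_def)

lemma R_comp_inner: "R_comp (R_inner n x y) p = (\<Sum>j<n. R_comp (x j) p * R_comp (y j) p)"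
proof -
  have "R_comp (R_inner n x y) p = (\<Sum>m\<in>{m. mono_le m p}. \<Sum>j<n. R_mult (x j) (y j) m)"
    by (simp add: R_comp_def R_inner_def)
  also have "\<dots> = (\<Sum>j<n. \<Sum>m\<in>{m. mono_le m p}. R_mult (x j) (y j) m)"
    by (rule sum.swap)
  also have "\<dots> = (\<Sum>j<n. R_comp (x j) p * R_comp (y j) p)"
    by (simp add: R_comp_def[symmetric] R_comp_mult)
  finally show ?thesis .
qed

lemma tr_inner: "tr (R_inner n x y) = (\<Sum>j<n. tr (R_mult (x j) (y j)))"
  unfolding tr_def R_comp_inner R_comp_mult by (rule sum.swap)

lemma R_eq_zero_iff: "s = R_zero \<longleftrightarrow> (\<forall>p. R_comp s p = 0)"
proof
  assume "\<forall>p. R_comp s p = 0"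
  hence "R_comp s = R_comp R_zero" by auto
  thus "s = R_zero" using R_comp_inj by (simp add: inj_eq)
qed simp

lemma finite_vecs: "finite (vecs n)"
proof -
  have "vecs n \<subseteq> (\<lambda>f i. if i < n then f i else R_zero) ` (PiE {..<n} (\<lambda>_. UNIV))"
  proof
    fix y assume y: "y \<in> vecs n"
    have "y = (\<lambda>i. if i < n then restrict y {..<n} i else R_zero)"
      using y by (auto simp: vecs_def)
    moreover have "restrict y {..<n} \<in> PiE {..<n} (\<lambda>_. UNIV)" by simp
    ultimately show "y \<in> (\<lambda>f i. if i < n then f i else R_zero) ` (PiE {..<n} (\<lambda>_. UNIV))"
      by blast
  qed
  moreover have "finite (PiE {..<n} (\<lambda>_. UNIV::R set))" by (simp add: finite_PiE)
  ultimately show ?thesis using finite_subset by blast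
qed

lemma lc_finite: "linear_code n C \<Longrightarrow> finite C"
  using finite_vecs finite_subset unfolding linear_code_def by blast

lemma tr_add_inner: "tr (R_inner n (\<lambda>i. R_add (x i) (x1 i)) y) = tr (R_inner n x y) + tr (R_inner n x1 y)"
  unfolding tr_def R_comp_inner R_comp_add by (simp add: algebra_simps sum.distrib)

lemma orth:
  assumes lin: "linear_code n C" and y: "y \<in> vecs n"
  shows "(\<Sum>x\<in>C. chi (tr (R_inner n x y))) = (if y \<in> dual_code n C then of_nat (card C) else 0)"
proof (cases "y \<in> dual_code n C")
  case True
  hence "\<And>x. x \<in> C \<Longrightarrow> tr (R_inner n x y) = 0"
    by (auto simp: dual_code_def tr_def)
  thus ?thesis using True by simp
next
  case False
  let ?T = "\<lambda>x. tr (R_inner n x y)"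
  have fin: "finite C" using lin lc_finite by blast
  obtain x0 where x0: "x0 \<in> C" "R_inner n x0 y \<noteq> R_zero"
    using False y by (auto simp: dual_code_def)
  then obtain p where p: "R_comp (R_inner n x0 y) p \<noteq> 0" using R_eq_zero_iff by blast
  obtain r where r: "R_comp r = (\<lambda>q. if q = p then 1 else 0)"
    using R_comp_bij by (metis bij_pointE)
  define x1 where "x1 = (\<lambda>i. R_mult r (x0 i))"
  have x1C: "x1 \<in> C" using lin x0 unfolding linear_code_def x1_def by blast
  have "?T x1 = (\<Sum>q\<in>UNIV. R_comp r q * R_comp (R_inner n x0 y) q)"
    unfolding tr_def R_comp_inner x1_def R_comp_mult by (simp add: sum_distrib_left mult.assoc)
  also have "\<dots> = R_comp (R_inner n x0 y) p" by (simp add: r if_distrib[of "\<lambda>z. z * _"] cong: if_cong)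
  finally have T1: "?T x1 \<noteq> 0" using p by simp
  define tau where "tau = (\<lambda>x i. R_add (x i) (x1 i))"
  have tauC: "tau ` C \<subseteq> C" using lin x1C unfolding linear_code_def tau_def by blast
  have injt: "inj_on tau C"
  proof
    fix a b assume "tau a = tau b"
    hence "\<And>i m. a i m + x1 i m = b i m + x1 i m" unfolding tau_def R_add_def by meson
    thus "a = b" by (intro ext) simp
  qed
  have tau_eq: "tau ` C = C" using endo_inj_surj[OF fin tauC injt] .
  have "(\<Sum>x\<in>C. chi (?T x)) = (\<Sum>x\<in>tau ` C. chi (?T x))" by (simp add: tau_eq)
  also have "\<dots> = (\<Sum>x\<in>C. chi (?T (tau x)))" by (simp add: sum.reindex[OF injt])
  also have "\<dots> = (\<Sum>x\<in>C. chi (?T x1) * chi (?T x))"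
    unfolding tau_def tr_add_inner chi_add by (simp add: mult.commute)
  also have "\<dots> = chi (?T x1) * (\<Sum>x\<in>C. chi (?T x))" by (simp add: sum_distrib_left)
  finally have "(1 - chi (?T x1)) * (\<Sum>x\<in>C. chi (?T x)) = 0" by (simp add: algebra_simps)
  moreover have "1 - chi (?T x1) \<noteq> 0" using T1 chi_one_iff by auto
  ultimately show ?thesis using False by simp
qed




lemma prod_sum_vecs:
  fixes g :: "nat \<Rightarrow> R \<Rightarrow> 'b::comm_semiring_1"
  shows "(\<Prod>i<n. \<Sum>a\<in>F i. g i a) = (\<Sum>y\<in>{y\<in>vecs n. \<forall>i<n. y i \<in> F i}. \<Prod>i<n. g i (y i))"
proof -
  define ext :: "(nat \<Rightarrow> R) \<Rightarrow> nat \<Rightarrow> R" where "ext = (\<lambda>f i. if i < n then f i else R_zero)"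
  have bij: "bij_betw ext (PiE {..<n} F) {y\<in>vecs n. \<forall>i<n. y i \<in> F i}"
    unfolding bij_betw_def
  proof
    show "inj_on ext (PiE {..<n} F)"
    proof
      fix f g assume f: "f \<in> PiE {..<n} F" and g: "g \<in> PiE {..<n} F" and e: "ext f = ext g"
      show "f = g"
      proof
        fix i show "f i = g i"
        proof (cases "i < n")
          case True
          have "ext f i = ext g i" using e by simp
          thus ?thesis using True unfolding ext_def by simp
        next
          case False
          hence "i \<notin> {..<n}" by simp
          thus ?thesis using PiE_arb[OF f] PiE_arb[OF g] by metis
        qed
      qed
    qed
    show "ext ` PiE {..<n} F = {y\<in>vecs n. \<forall>i<n. y i \<in> F i}"
    proof
      show "ext ` PiE {..<n} F \<subseteq> {y\<in>vecs n. \<forall>i<n. y i \<in> F i}"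
      proof
        fix z assume "z \<in> ext ` PiE {..<n} F"
        then obtain f where f: "f \<in> PiE {..<n} F" and z: "z = ext f" by blast
        have "\<forall>i. n \<le> i \<longrightarrow> z i = R_zero" unfolding z ext_def by simp
        moreover have "\<forall>i<n. z i \<in> F i"
        proof (intro allI impI)
          fix i assume "i < n"
          thus "z i \<in> F i" using PiE_mem[OF f, of i] unfolding z ext_def by simp
        qed
        ultimately show "z \<in> {y\<in>vecs n. \<forall>i<n. y i \<in> F i}" unfolding vecs_def by blast
      qed
      show "{y\<in>vecs n. \<forall>i<n. y i \<in> F i} \<subseteq> ext ` PiE {..<n} F"
      proof
        fix y assume y: "y \<in> {y\<in>vecs n. \<forall>i<n. y i \<in> F i}"
        have "y = ext (restrict y {..<n})" using y by (auto simp: ext_def vecs_def)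
        moreover have "restrict y {..<n} \<in> PiE {..<n} F" using y by auto
        ultimately show "y \<in> ext ` PiE {..<n} F" by blast
      qed
    qed
  qed
  have "(\<Prod>i<n. \<Sum>a\<in>F i. g i a) = (\<Sum>f\<in>PiE {..<n} F. \<Prod>i<n. g i (f i))"
    by (rule prod_sum_PiE) auto
  also have "\<dots> = (\<Sum>f\<in>PiE {..<n} F. \<Prod>i<n. g i (ext f i))"
    by (intro sum.cong refl prod.cong) (auto simp: ext_def)
  also have "\<dots> = (\<Sum>y\<in>{y\<in>vecs n. \<forall>i<n. y i \<in> F i}. \<Prod>i<n. g i (y i))"
    by (rule sum.reindex_bij_betw[OF bij])
  finally show ?thesis .
qed

lemma main_complex:
  assumes lin: "linear_code n C"
  shows "of_nat (card C) * of_nat (card {y\<in>dual_code n C. \<forall>i<n. lee_R (y i) = J i})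
     = (\<Sum>x\<in>C. \<Prod>i<n. (of_int (Kraw (J i) (lee_R (x i))) :: complex))"
proof -
  define S where "S = {y\<in>vecs n. \<forall>i<n. y i \<in> {a. lee_R a = J i}}"
  have finS: "finite S" unfolding S_def using finite_vecs by simp
  have finC: "finite C" using lin lc_finite by blast
  have "(\<Sum>x\<in>C. \<Prod>i<n. (of_int (Kraw (J i) (lee_R (x i))) :: complex))
      = (\<Sum>x\<in>C. \<Prod>i<n. \<Sum>a\<in>{a. lee_R a = J i}. chi (tr (R_mult (x i) a)))"
    by (simp add: local_K)
  also have "\<dots> = (\<Sum>x\<in>C. \<Sum>y\<in>S. \<Prod>i<n. chi (tr (R_mult (x i) (y i))))"
    unfolding S_def by (simp add: prod_sum_vecs)
  also have "\<dots> = (\<Sum>x\<in>C. \<Sum>y\<in>S. chi (tr (R_inner n x y)))"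
    by (simp add: tr_inner chi_sum)
  also have "\<dots> = (\<Sum>y\<in>S. \<Sum>x\<in>C. chi (tr (R_inner n x y)))"
    by (rule sum.swap)
  also have "\<dots> = (\<Sum>y\<in>S. if y \<in> dual_code n C then of_nat (card C) else 0)"
    by (rule sum.cong[OF refl], rule orth[OF lin]) (simp add: S_def)
  also have "\<dots> = of_nat (card {y\<in>S. y \<in> dual_code n C}) * of_nat (card C)"
    using finS by (simp add: sum.If_cases Int_def)
  also have "{y\<in>S. y \<in> dual_code n C} = {y\<in>dual_code n C. \<forall>i<n. lee_R (y i) = J i}"
    unfolding S_def dual_code_def by auto
  finally show ?thesis by (simp add: mult.commute)
qed

lemma main_int:
  assumes lin: "linear_code n C"
  shows "int (card C) * int (card {y\<in>dual_code n C. \<forall>i<n. lee_R (y i) = J i})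
     = (\<Sum>x\<in>C. \<Prod>i<n. Kraw (J i) (lee_R (x i)))"
proof -
  have "(of_int (int (card C) * int (card {y\<in>dual_code n C. \<forall>i<n. lee_R (y i) = J i})) :: complex)
     = of_int (\<Sum>x\<in>C. \<Prod>i<n. Kraw (J i) (lee_R (x i)))"
    using main_complex[OF lin, of J] by simp
  thus ?thesis by (simp only: of_int_eq_iff)
qed




lemma lee_R_le: "lee_R x \<le> 16"
proof -
  have "lee_R x \<le> of_nat (card (UNIV::mono set)) * 2"
    unfolding lee_R_def by (rule sum_bounded_above) (simp add: lee_z4_le)
  thus ?thesis using card_mono by simp
qed

lemma prod_nwt:
  fixes f :: "nat \<Rightarrow> nat" and X :: "nat \<Rightarrow> 'a::comm_monoid_mult"
  assumes "\<forall>i<n. f i \<le> 16"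
  shows "(\<Prod>j\<le>16. X j ^ card {i. i < n \<and> f i = j}) = (\<Prod>i<n. X (f i))"
  using assms
proof (induction n)
  case 0 thus ?case by simp
next
  case (Suc n)
  have c: "card {i. i < Suc n \<and> f i = j} = card {i. i < n \<and> f i = j} + (if f n = j then 1 else 0)" for j
  proof -
    have "{i. i < Suc n \<and> f i = j} = (if f n = j then insert n {i. i < n \<and> f i = j} else {i. i < n \<and> f i = j})"
      by (auto simp: less_Suc_eq)
    thus ?thesis by (simp add: card_insert_if)
  qed
  have "(\<Prod>j\<le>16. X j ^ card {i. i < Suc n \<and> f i = j})
      = (\<Prod>j\<le>16. X j ^ card {i. i < n \<and> f i = j} * X j ^ (if f n = j then 1 else 0))"
    by (simp only: c power_add)
  also have "\<dots> = (\<Prod>j\<le>16. X j ^ card {i. i < n \<and> f i = j}) * (\<Prod>j\<le>16. X j ^ (if f n = j then 1 else 0))"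
    by (rule prod.distrib)
  also have "(\<Prod>j\<le>16. X j ^ (if f n = j then 1 else 0)) = (\<Prod>j\<le>16. if f n = j then X j else 1)"
    by (rule prod.cong) auto
  also have "\<dots> = X (f n)"
    using Suc.prems by (simp add: prod.delta prod.delta')
  finally show ?case using Suc by simp
qed

lemma SLWE_alt: "SLWE n D X = (\<Sum>c\<in>D. \<Prod>i<n. X (lee_R (c i)))"
  unfolding SLWE_def n_wt_def by (rule sum.cong[OF refl], rule prod_nwt) (simp add: lee_R_le)

lemma restrict_eq_iff: assumes J: "J \<in> PiE A B" shows "(restrict f A = J) \<longleftrightarrow> (\<forall>i\<in>A. f i = J i)"
proof
  show "restrict f A = J \<Longrightarrow> \<forall>i\<in>A. f i = J i" by (metis restrict_apply')
  show "\<forall>i\<in>A. f i = J i \<Longrightarrow> restrict f A = J"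
  proof -
    assume h: "\<forall>i\<in>A. f i = J i"
    show "restrict f A = J"
    proof
      fix i show "restrict f A i = J i"
      proof (cases "i \<in> A")
        case True thus ?thesis using h by simp
      next
        case False thus ?thesis using PiE_arb[OF J False] by simp
      qed
    qed
  qed
qed

theorem mainTheorem5:
  fixes n :: nat and C :: "(nat \<Rightarrow> R) set" and X :: "nat \<Rightarrow> 'a::field_char_0"
  assumes "linear_code n C"
  shows "SLWE n (dual_code n C) X = SLWE n C (Bvar X) / of_nat (card C)"
proof -
  note lin = assms
  define D where "D = dual_code n C"
  define Js where "Js = PiE {..<n} (\<lambda>_. {..16::nat})"
  define cnt where "cnt = (\<lambda>J. card {y\<in>D. \<forall>i<n. lee_R (y i) = J i})"
  have finC: "finite C" using lin lc_finite by blast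
  have finD: "finite D" unfolding D_def dual_code_def using finite_vecs by simp
  have finJs: "finite Js" unfolding Js_def by (simp add: finite_PiE)
  have L: "SLWE n D X = (\<Sum>J\<in>Js. of_nat (cnt J) * (\<Prod>i<n. X (J i)))"
  proof -
    have "SLWE n D X = (\<Sum>y\<in>D. \<Prod>i<n. X (lee_R (y i)))" by (rule SLWE_alt)
    also have "\<dots> = (\<Sum>J\<in>Js. \<Sum>y\<in>{y. y \<in> D \<and> restrict (\<lambda>i. lee_R (y i)) {..<n} = J}. \<Prod>i<n. X (lee_R (y i)))"
      by (rule sum.group[symmetric, OF finD finJs]) (unfold Js_def, intro image_subsetI, simp add: restrict_PiE_iff lee_R_le del: restrict_PiE)
    also have "\<dots> = (\<Sum>J\<in>Js. \<Sum>y\<in>{y\<in>D. \<forall>i<n. lee_R (y i) = J i}. \<Prod>i<n. X (J i))"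
    proof (rule sum.cong[OF refl])
      fix J assume J: "J \<in> Js"
      have "{y. y \<in> D \<and> restrict (\<lambda>i. lee_R (y i)) {..<n} = J} = {y\<in>D. \<forall>i<n. lee_R (y i) = J i}"
        using restrict_eq_iff[OF J[unfolded Js_def]] by auto
      thus "(\<Sum>y\<in>{y. y \<in> D \<and> restrict (\<lambda>i. lee_R (y i)) {..<n} = J}. \<Prod>i<n. X (lee_R (y i)))
          = (\<Sum>y\<in>{y\<in>D. \<forall>i<n. lee_R (y i) = J i}. \<Prod>i<n. X (J i))"
        by (auto intro!: sum.cong prod.cong)
    qed
    also have "\<dots> = (\<Sum>J\<in>Js. of_nat (cnt J) * (\<Prod>i<n. X (J i)))"
      by (simp add: cnt_def)
    finally show ?thesis .
  qed
  have Rt: "SLWE n C (Bvar X) = (\<Sum>J\<in>Js. of_nat (card C) * of_nat (cnt J) * (\<Prod>i<n. X (J i)))"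
  proof -
    have "SLWE n C (Bvar X) = (\<Sum>x\<in>C. \<Prod>i<n. \<Sum>j\<le>16. of_int (Kraw j (lee_R (x i))) * X j)"
      by (simp add: SLWE_alt Bvar_def)
    also have "\<dots> = (\<Sum>x\<in>C. \<Sum>J\<in>Js. \<Prod>i<n. of_int (Kraw (J i) (lee_R (x i))) * X (J i))"
      unfolding Js_def by (rule sum.cong[OF refl], rule prod_sum_PiE) auto
    also have "\<dots> = (\<Sum>J\<in>Js. \<Sum>x\<in>C. (\<Prod>i<n. of_int (Kraw (J i) (lee_R (x i)))) * (\<Prod>i<n. X (J i)))"
      by (subst sum.swap) (simp add: prod.distrib)
    also have "\<dots> = (\<Sum>J\<in>Js. of_int (\<Sum>x\<in>C. \<Prod>i<n. Kraw (J i) (lee_R (x i))) * (\<Prod>i<n. X (J i)))"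
      by (simp add: sum_distrib_right of_int_sum of_int_prod)
    also have "\<dots> = (\<Sum>J\<in>Js. of_nat (card C) * of_nat (cnt J) * (\<Prod>i<n. X (J i)))"
      unfolding cnt_def D_def main_int[OF lin, symmetric] by simp
    finally show ?thesis .
  qed
  have "(\<lambda>_. R_zero) \<in> C" using lin unfolding linear_code_def by blast
  hence "card C \<noteq> 0" using finC by auto
  hence nz: "(of_nat (card C) :: 'a) \<noteq> 0" by simp
  have "SLWE n C (Bvar X) = of_nat (card C) * SLWE n D X"
    unfolding Rt L by (simp add: sum_distrib_left mult.assoc)
  thus ?thesis using nz unfolding D_def by (simp add: field_simps)
qed


end
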